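(* Let $q\ge2$ be a prime power, let $2\le k<n$, and let $D$ be a $(k-1)$-$(n,k,1)_q$-design. Let $C$ be the set of all $(k+1)$-dimensional subspaces $U$ of $\mathbb{F}_q^n$ such that no element of $D$ is contained in $U$. If $C$ and its complement in the vertex set of $J_q(n,k+1)$ are both nonempty, then $C$ is a completely regular code in the Grassmann graph $J_q(n,k+1)$ with covering radius $1$.
   Context: The Grassmann graph $J_q(n,k)$ has as vertices the $k$-dimensional subspaces of $\mathbb{F}_q^n$, adjacent iff they meet in a $(k-1)$-dimensional subspace. A $t$-$(n,k,\lambda)_q$-design is a set $D$ of $k$-dimensional subspaces of $\mathbb{F}_q^n$ (without repetition) such that every $t$-dimensional subspace of $\mathbb{F}_q^n$ is contained in exactly $\lambda$ elements of $D$. A nonempty vertex set $C$ of a regular graph is a completely regular code with covering radius $1$ if every vertex is in $C$ or adjacent to $C$, not all vertices are in $C$, and there are numbers $\beta_0,\gamma_1$ such that every vertex of $C$ has exactly $\beta_0$ neighbours outside $C$ and every vertex outside $C$ has exactly $\gamma_1$ neighbours in $C$. *)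

theory Defs
  imports "HOL-Analysis.Analysis"
begin

text \<open>The space F_q^n is modelled as 'a ^ 'n with 'a a finite field (|'a| = q, any prime power)
  and CARD('n) = n. Subspaces and dimension are those of the library vector space vec.\<close>

definition subspaces_of_dim :: "nat \<Rightarrow> ('a::field ^ 'n) set set" where
  "subspaces_of_dim k = {U. vec.subspace U \<and> vec.dim U = k}"

text \<open>Grassmann graph J_q(n,k): vertices are the k-subspaces, adjacent iff they meet in a
  (k-1)-dimensional subspace.\<close>
definition grassmann_adj :: "nat \<Rightarrow> ('a::field ^ 'n) set \<Rightarrow> ('a ^ 'n) set \<Rightarrow> bool" where
  "grassmann_adj k U W \<longleftrightarrow> U \<in> subspaces_of_dim k \<and> W \<in> subspaces_of_dim k
      \<and> vec.dim (U \<inter> W) = k - 1"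

text \<open>A t-(n,k,lambda)_q design: a set of k-subspaces such that every t-subspace lies in exactly
  lambda of them.\<close>
definition is_q_design :: "nat \<Rightarrow> nat \<Rightarrow> nat \<Rightarrow> ('a::field ^ 'n) set set \<Rightarrow> bool" where
  "is_q_design t k lam D \<longleftrightarrow> D \<subseteq> subspaces_of_dim k \<and>
     (\<forall>T \<in> subspaces_of_dim t. card {B \<in> D. T \<subseteq> B} = lam)"

text \<open>Completely regular code with covering radius 1 in the graph (V, adj).\<close>
definition crc_radius1 :: "'v set \<Rightarrow> ('v \<Rightarrow> 'v \<Rightarrow> bool) \<Rightarrow> 'v set \<Rightarrow> bool" where
  "crc_radius1 V adj C \<longleftrightarrow> C \<noteq> {} \<and> C \<subseteq> V \<and> C \<noteq> V \<and>
     (\<forall>v \<in> V. v \<in> C \<or> (\<exists>c \<in> C. adj v c)) \<and>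
     (\<exists>beta0 gamma1.
        (\<forall>c \<in> C. card {v \<in> V - C. adj c v} = beta0) \<and>
        (\<forall>v \<in> V - C. card {c \<in> C. adj v c} = gamma1))"

end

theory Submission
  imports Defs
begin

abbreviation ssum :: "('a::field ^ 'n) set \<Rightarrow> ('a ^ 'n) set \<Rightarrow> ('a ^ 'n) set" where
  "ssum S T \<equiv> {x + y |x y. x \<in> S \<and> y \<in> T}"

lemma basis_of:
  fixes S :: "('a::field ^ 'n) set"
  assumes "vec.subspace S"
  obtains P where "P \<subseteq> S" "vec.independent P" "vec.span P = S" "card P = vec.dim S"
proof -
  obtain P where P: "P \<subseteq> S" "vec.independent P" "S \<subseteq> vec.span P" "card P = vec.dim S"
    by (rule vec.basis_exists)
  then have "vec.span P = S" using vec.span_subspace assms by blast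
  with P show ?thesis using that by blast
qed

lemma extend_basis_in:
  fixes T :: "('a::field ^ 'n) set"
  assumes "vec.subspace T" "P \<subseteq> T" "vec.independent P"
  obtains Q where "P \<subseteq> Q" "Q \<subseteq> T" "vec.independent Q" "vec.span Q = T" "card Q = vec.dim T"
proof -
  obtain Q where Q: "P \<subseteq> Q" "Q \<subseteq> T" "vec.independent Q" "T \<subseteq> vec.span Q"
    using vec.maximal_independent_subset_extend[OF assms(2,3)] by blast
  then have "vec.span Q = T" using vec.span_subspace assms by blast
  moreover have "card Q = vec.dim T" using vec.basis_card_eq_dim Q by blast
  ultimately show ?thesis using that Q by blast
qed

lemma flag_transitive:
  fixes S T S' T' :: "('a::field ^ 'n) set"
  assumes "vec.subspace S" "vec.subspace T" "S \<subseteq> T"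
    "vec.subspace S'" "vec.subspace T'" "S' \<subseteq> T'"
    "vec.dim S = vec.dim S'" "vec.dim T = vec.dim T'"
  obtains g where "Vector_Spaces.linear (*s) (*s) g" "inj g" "g ` S = S'" "g ` T = T'"
proof -
  obtain P where P: "P \<subseteq> S" "vec.independent P" "vec.span P = S" "card P = vec.dim S"
    using basis_of[OF assms(1)] by blast
  obtain Q where Q: "P \<subseteq> Q" "Q \<subseteq> T" "vec.independent Q" "vec.span Q = T" "card Q = vec.dim T"
    using extend_basis_in[OF assms(2) _ P(2)] P(1) assms(3) by blast
  obtain R where R: "Q \<subseteq> R" "R \<subseteq> UNIV" "vec.independent R" "vec.span R = UNIV" "card R = vec.dim (UNIV::('a^'n) set)"
    by (rule extend_basis_in[OF vec.subspace_UNIV subset_UNIV Q(3)])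
  obtain P' where P': "P' \<subseteq> S'" "vec.independent P'" "vec.span P' = S'" "card P' = vec.dim S'"
    using basis_of[OF assms(4)] by blast
  obtain Q' where Q': "P' \<subseteq> Q'" "Q' \<subseteq> T'" "vec.independent Q'" "vec.span Q' = T'" "card Q' = vec.dim T'"
    using extend_basis_in[OF assms(5) _ P'(2)] P'(1) assms(6) by blast
  obtain R' where R': "Q' \<subseteq> R'" "R' \<subseteq> UNIV" "vec.independent R'" "vec.span R' = UNIV" "card R' = vec.dim (UNIV::('a^'n) set)"
    by (rule extend_basis_in[OF vec.subspace_UNIV subset_UNIV Q'(3)])
  have fin: "finite R" "finite R'" using R(3) R'(3) vec.finiteI_independent by auto
  then have fin2: "finite Q" "finite Q'" "finite P" "finite P'" using Q(1) R(1) Q'(1) R'(1) P(1)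
    by (metis finite_subset)+
  have c1: "card P = card P'" using P P' assms by simp
  have c2: "card (Q - P) = card (Q' - P')"
    using Q Q' P P' assms fin2 by (simp add: card_Diff_subset)
  have c3: "card (R - Q) = card (R' - Q')"
    using R R' Q Q' fin fin2 assms by (simp add: card_Diff_subset)
  obtain h1 where h1: "bij_betw h1 P P'" using c1 fin2 by (meson bij_betw_iff_card)
  obtain h2 where h2: "bij_betw h2 (Q - P) (Q' - P')" using c2 fin2 by (meson bij_betw_iff_card finite_Diff)
  obtain h3 where h3: "bij_betw h3 (R - Q) (R' - Q')" using c3 fin by (meson bij_betw_iff_card finite_Diff)
  define h where "h x = (if x \<in> P then h1 x else if x \<in> Q then h2 x else h3 x)" for x
  have b1: "bij_betw h P P'" using h1 by (rule bij_betw_cong[THEN iffD1, rotated]) (simp add: h_def)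
  have b2: "bij_betw h (Q - P) (Q' - P')" using h2 by (rule bij_betw_cong[THEN iffD1, rotated]) (simp add: h_def)
  have b3: "bij_betw h (R - Q) (R' - Q')" using h3 by (rule bij_betw_cong[THEN iffD1, rotated]) (insert Q(1), auto simp: h_def)
  have bQ: "bij_betw h Q Q'"
  proof -
    have "bij_betw h (P \<union> (Q - P)) (P' \<union> (Q' - P'))" by (rule bij_betw_combine[OF b1 b2]) auto
    moreover have "P \<union> (Q - P) = Q" "P' \<union> (Q' - P') = Q'" using Q(1) Q'(1) by auto
    ultimately show ?thesis by simp
  qed
  have bR: "bij_betw h R R'"
  proof -
    have "bij_betw h (Q \<union> (R - Q)) (Q' \<union> (R' - Q'))" by (rule bij_betw_combine[OF bQ b3]) auto
    moreover have "Q \<union> (R - Q) = R" "Q' \<union> (R' - Q') = R'" using R(1) R'(1) by auto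
    ultimately show ?thesis by simp
  qed
  obtain g where g: "Vector_Spaces.linear (*s) (*s) g" "\<forall>x\<in>R. g x = h x"
    using vec.linear_independent_extend[OF R(3)] by blast
  have PR: "P \<subseteq> R" using P(1) Q(1) R(1) by blast
  have gP: "g ` P = P'"
  proof -
    have "g ` P = h ` P" using g(2) PR by (intro image_cong) auto
    then show ?thesis using b1 by (simp add: bij_betw_def)
  qed
  have gQ: "g ` Q = Q'"
  proof -
    have "g ` Q = h ` Q" using g(2) R(1) by (intro image_cong) auto
    then show ?thesis using bQ by (simp add: bij_betw_def)
  qed
  have gR: "g ` R = R'"
  proof -
    have "g ` R = h ` R" using g(2) by (intro image_cong) auto
    then show ?thesis using bR by (simp add: bij_betw_def)
  qed
  have "g ` S = S'" using vec.linear_span_image[OF g(1), of P] gP P(3) P'(3) by simp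
  moreover have "g ` T = T'" using vec.linear_span_image[OF g(1), of Q] gQ Q(4) Q'(4) by simp
  moreover have "surj g" using vec.linear_span_image[OF g(1), of R] gR R(4) R'(4) by simp
  then have "inj g" using vec.linear_surj_imp_inj[OF g(1)] by simp
  ultimately show ?thesis using that g(1) by blast
qed

lemma img_sub:
  fixes g :: "'a::field ^ 'n \<Rightarrow> 'a ^ 'n"
  assumes "Vector_Spaces.linear (*s) (*s) g" "inj g" "X \<in> subspaces_of_dim d"
  shows "g ` X \<in> subspaces_of_dim d"
proof -
  have "vec.subspace (g ` X)" using vec.linear_subspace_image assms unfolding subspaces_of_dim_def by blast
  moreover have "vec.dim (g ` X) = vec.dim X"
    by (rule vec.dim_image_eq[OF assms(1)]) (use assms(2) in \<open>auto intro: inj_on_subset\<close>)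
  ultimately show ?thesis using assms(3) unfolding subspaces_of_dim_def by simp
qed

definition PH :: "nat \<Rightarrow> ('a::field ^ 'n) set \<Rightarrow> (('a ^ 'n) set \<times> ('a ^ 'n) set) set" where
  "PH k U = {(T,H). T \<in> subspaces_of_dim (k-1) \<and> H \<in> subspaces_of_dim k \<and> T \<subseteq> H \<and> H \<subseteq> U}"

definition PHB :: "nat \<Rightarrow> ('a::field ^ 'n) set \<Rightarrow> ('a ^ 'n) set \<Rightarrow> (('a ^ 'n) set \<times> ('a ^ 'n) set) set" where
  "PHB k U B = {(T,H) \<in> PH k U. \<not> T \<subseteq> B}"

definition AB :: "nat \<Rightarrow> ('a::field ^ 'n) set \<Rightarrow> ('a ^ 'n) set \<Rightarrow> ('a ^ 'n) set set" where
  "AB k V B = {W \<in> subspaces_of_dim (k+1). B \<subseteq> W \<and> W \<noteq> V}"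

definition NB :: "nat \<Rightarrow> ('a::field ^ 'n) set \<Rightarrow> ('a ^ 'n) set set" where
  "NB k V = {W \<in> subspaces_of_dim (k+1). grassmann_adj (k+1) V W}"

lemma inj_img: "inj g \<Longrightarrow> inj_on ((`) g) A"
  by (auto simp: inj_on_def inj_image_eq_iff)

lemma inj_img2: "inj g \<Longrightarrow> inj_on (\<lambda>(T,H). (g ` T, g ` H)) A"
  by (auto simp: inj_on_def inj_image_eq_iff)

context
  fixes g :: "'a::{field,finite} ^ 'n \<Rightarrow> 'a ^ 'n"
  assumes lin: "Vector_Spaces.linear (*s) (*s) g" and ig: "inj g"
begin

lemma PH_le: "card (PH k U) \<le> card (PH k (g ` U))"
proof (rule card_inj_on_le[OF inj_img2[OF ig]])
  show "(\<lambda>(T,H). (g ` T, g ` H)) ` PH k U \<subseteq> PH k (g ` U)"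
    by (auto simp: PH_def intro!: img_sub[OF lin ig] image_mono)
qed simp

lemma PHB_le: "card (PHB k U B) \<le> card (PHB k (g ` U) (g ` B))"
proof (rule card_inj_on_le[OF inj_img2[OF ig]])
  show "(\<lambda>(T,H). (g ` T, g ` H)) ` PHB k U B \<subseteq> PHB k (g ` U) (g ` B)"
    by (auto simp: PHB_def PH_def inj_image_subset_iff[OF ig] intro!: img_sub[OF lin ig] image_mono)
qed simp

lemma AB_le: "card (AB k V B) \<le> card (AB k (g ` V) (g ` B))"
proof (rule card_inj_on_le[OF inj_img[OF ig]])
  show "(`) g ` AB k V B \<subseteq> AB k (g ` V) (g ` B)"
    by (auto simp: AB_def inj_image_eq_iff[OF ig] intro!: img_sub[OF lin ig] image_mono)
qed simp

lemma NB_le: "card (NB k V) \<le> card (NB k (g ` V))"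
proof (rule card_inj_on_le[OF inj_img[OF ig]])
  show "(`) g ` NB k V \<subseteq> NB k (g ` V)"
  proof
    fix W' assume "W' \<in> (`) g ` NB k V"
    then obtain W where W: "W \<in> NB k V" "W' = g ` W" by blast
    have "g ` (V \<inter> W) = g ` V \<inter> g ` W" using ig by (simp add: image_Int)
    moreover have "V \<inter> W \<in> subspaces_of_dim k" using W(1)
      by (auto simp: NB_def grassmann_adj_def subspaces_of_dim_def vec.subspace_inter)
    ultimately have "g ` V \<inter> g ` W \<in> subspaces_of_dim k" using img_sub[OF lin ig] by metis
    then show "W' \<in> NB k (g ` V)" using W img_sub[OF lin ig]
      by (auto simp: NB_def grassmann_adj_def subspaces_of_dim_def)
  qed
qed simp

end

lemma PH_inv:
  fixes U U' :: "('a::{field,finite} ^ 'n) set"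
  assumes "U \<in> subspaces_of_dim d" "U' \<in> subspaces_of_dim d"
  shows "card (PH k U) = card (PH k U')"
proof -
  have s: "vec.subspace U" "vec.subspace U'" "vec.dim U = vec.dim U'" using assms by (auto simp: subspaces_of_dim_def)
  obtain g where g: "Vector_Spaces.linear (*s) (*s) g" "inj g" "g ` U = U'" "g ` U = U'"
    by (rule flag_transitive[OF s(1) s(1) order_refl s(2) s(2) order_refl s(3) s(3)])
  obtain g' where g': "Vector_Spaces.linear (*s) (*s) g'" "inj g'" "g' ` U' = U" "g' ` U' = U"
    by (rule flag_transitive[OF s(2) s(2) order_refl s(1) s(1) order_refl s(3)[symmetric] s(3)[symmetric]])
  show ?thesis using PH_le[OF g(1,2), of k U] PH_le[OF g'(1,2), of k U'] g(3) g'(3) by simp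
qed

lemma flag_inv:
  fixes V V' B B' :: "('a::{field,finite} ^ 'n) set"
  assumes "V \<in> subspaces_of_dim d" "V' \<in> subspaces_of_dim d"
    "B \<in> subspaces_of_dim e" "B' \<in> subspaces_of_dim e" "B \<subseteq> V" "B' \<subseteq> V'"
  shows "card (NB k V) = card (NB k V') \<and> card (AB k V B) = card (AB k V' B')
     \<and> card (PHB k V B) = card (PHB k V' B')"
proof -
  have s: "vec.subspace V" "vec.subspace V'" "vec.dim V = vec.dim V'"
     "vec.subspace B" "vec.subspace B'" "vec.dim B = vec.dim B'"
    using assms by (auto simp: subspaces_of_dim_def)
  obtain g where g: "Vector_Spaces.linear (*s) (*s) g" "inj g" "g ` B = B'" "g ` V = V'"
    by (rule flag_transitive[OF s(4) s(1) assms(5) s(5) s(2) assms(6) s(6) s(3)])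
  obtain g' where g': "Vector_Spaces.linear (*s) (*s) g'" "inj g'" "g' ` B' = B" "g' ` V' = V"
    by (rule flag_transitive[OF s(5) s(2) assms(6) s(4) s(1) assms(5) s(6)[symmetric] s(3)[symmetric]])
  show ?thesis
    using NB_le[OF g(1,2), of k V] NB_le[OF g'(1,2), of k V']
      AB_le[OF g(1,2), of k V B] AB_le[OF g'(1,2), of k V' B']
      PHB_le[OF g(1,2), of k V B] PHB_le[OF g'(1,2), of k V' B'] g(3,4) g'(3,4) by simp
qed

lemma sub_of_dim:
  fixes X :: "('a::field ^ 'n) set"
  assumes "vec.subspace X" "m \<le> vec.dim X"
  obtains T where "T \<in> subspaces_of_dim m" "T \<subseteq> X"
proof -
  obtain P where P: "P \<subseteq> X" "vec.independent P" "vec.span P = X" "card P = vec.dim X"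
    using basis_of[OF assms(1)] by blast
  have "finite P" using P(2) vec.finiteI_independent by blast
  then obtain P' where P': "P' \<subseteq> P" "card P' = m" using obtain_subset_with_card_n assms(2) P(4) by metis
  have "vec.independent P'" using P(2) P'(1) vec.independent_mono by blast
  then have "vec.dim (vec.span P') = card P'" by (rule vec.dim_span_eq_card_independent)
  then have "vec.dim (vec.span P') = m" using P'(2) by simp
  moreover have "vec.span P' \<subseteq> X" using P(3) P'(1) vec.span_mono by blast
  ultimately show ?thesis using that[of "vec.span P'"] by (simp add: subspaces_of_dim_def vec.subspace_span)
qed

lemma sub_in_ssum1: "vec.subspace Y \<Longrightarrow> X \<subseteq> ssum X Y"
  by (force intro: exI[of _ 0] simp: vec.subspace_0)

lemma sub_in_ssum2: "vec.subspace X \<Longrightarrow> Y \<subseteq> ssum X Y"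
proof
  fix y assume "vec.subspace X" "y \<in> Y"
  then show "y \<in> ssum X Y" by (intro CollectI exI[of _ 0] exI[of _ y]) (simp add: vec.subspace_0)
qed

lemma ssum_le: "vec.subspace W \<Longrightarrow> X \<subseteq> W \<Longrightarrow> Y \<subseteq> W \<Longrightarrow> ssum X Y \<subseteq> W"
  by (auto intro: vec.subspace_add)

lemma dim_eq_sub:
  fixes X Y :: "('a::field ^ 'n) set"
  shows "vec.subspace X \<Longrightarrow> vec.subspace Y \<Longrightarrow> X \<subseteq> Y \<Longrightarrow> vec.dim Y \<le> vec.dim X \<Longrightarrow> X = Y"
  using vec.subspace_dim_equal by blast

locale qdes =
  fixes D :: "('a::{field,finite} ^ 'n) set set" and k :: nat
  assumes k2: "2 \<le> k"
    and Dsub: "D \<subseteq> subspaces_of_dim k"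
    and Dcnt: "\<And>T. T \<in> subspaces_of_dim (k-1) \<Longrightarrow> card {B \<in> D. T \<subseteq> B} = 1"
begin

definition blk where "blk T = (THE B. B \<in> D \<and> T \<subseteq> B)"
definition blkin where "blkin W = (SOME B. B \<in> D \<and> B \<subseteq> W)"

lemma uniq: "T \<in> subspaces_of_dim (k-1) \<Longrightarrow> \<exists>!B. B \<in> D \<and> T \<subseteq> B"
proof -
  assume "T \<in> subspaces_of_dim (k-1)"
  from Dcnt[OF this] obtain B where "{B \<in> D. T \<subseteq> B} = {B}" by (rule card_1_singletonE)
  then show ?thesis by (auto simp: set_eq_iff)
qed

lemma blk: "T \<in> subspaces_of_dim (k-1) \<Longrightarrow> blk T \<in> D \<and> T \<subseteq> blk T"
  unfolding blk_def using theI'[OF uniq] by blast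

lemma blk_eq: "T \<in> subspaces_of_dim (k-1) \<Longrightarrow> B \<in> D \<Longrightarrow> T \<subseteq> B \<Longrightarrow> blk T = B"
  unfolding blk_def using the1_equality[OF uniq] by blast

lemma DS: "B \<in> D \<Longrightarrow> vec.subspace B \<and> vec.dim B = k"
  using Dsub by (auto simp: subspaces_of_dim_def)

lemma L1:
  assumes "B1 \<in> D" "B2 \<in> D" "B1 \<subseteq> U" "B2 \<subseteq> U" "U \<in> subspaces_of_dim (k+1)"
  shows "B1 = B2"
proof -
  have s: "vec.subspace B1" "vec.subspace B2" "vec.dim B1 = k" "vec.dim B2 = k" using DS assms by auto
  have U: "vec.subspace U" "vec.dim U = k+1" using assms(5) by (auto simp: subspaces_of_dim_def)
  have "vec.dim (ssum B1 B2) \<le> k+1" using vec.dim_subset[OF ssum_le[OF U(1) assms(3,4)]] U by simp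
  moreover have "vec.dim (ssum B1 B2) + vec.dim (B1 \<inter> B2) = k + k" using vec.dim_sums_Int[OF s(1,2)] s by simp
  ultimately have "k - 1 \<le> vec.dim (B1 \<inter> B2)" by linarith
  then obtain T where T: "T \<in> subspaces_of_dim (k-1)" "T \<subseteq> B1 \<inter> B2"
    using sub_of_dim vec.subspace_inter s by blast
  then show ?thesis using uniq[OF T(1)] assms(1,2) by blast
qed

definition Nn where "Nn U = {W \<in> subspaces_of_dim (k+1). grassmann_adj (k+1) U W \<and> (\<exists>B\<in>D. B \<subseteq> W \<and> \<not> B \<subseteq> U)}"
definition Pp where "Pp U = {(T,H) \<in> PH k U. \<not> blk T \<subseteq> U}"

lemma small_int:
  assumes "B \<in> D" "\<not> B \<subseteq> U" "vec.subspace U"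
  shows "vec.dim (B \<inter> U) \<le> k - 1"
proof (rule ccontr)
  assume "\<not> ?thesis"
  then have "vec.dim B \<le> vec.dim (B \<inter> U)" using DS[OF assms(1)] by simp
  then have "B \<inter> U = B" using dim_eq_sub[of "B \<inter> U" B] DS[OF assms(1)] vec.subspace_inter assms(3) by blast
  then show False using assms(2) by blast
qed

lemma G:
  assumes U: "U \<in> subspaces_of_dim (k+1)"
  shows "card (Nn U) = card (Pp U)"
proof -
  have Us: "vec.subspace U" "vec.dim U = k+1" using U by (auto simp: subspaces_of_dim_def)
  define psi where "psi W = (blkin W \<inter> U, U \<inter> W)" for W
  define phi where "phi = (\<lambda>(T,H). ssum (blk T) H)"
  have A: "psi W \<in> Pp U \<and> phi (psi W) = W" if W: "W \<in> Nn U" for W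
  proof -
    from W obtain B0 where B0: "B0 \<in> D" "B0 \<subseteq> W" "\<not> B0 \<subseteq> U"
      and Ws: "W \<in> subspaces_of_dim (k+1)" and adj: "grassmann_adj (k+1) U W"
      unfolding Nn_def by blast
    have Wsub: "vec.subspace W" "vec.dim W = k+1" using Ws unfolding subspaces_of_dim_def by auto
    define B where "B = blkin W"
    have B': "B \<in> D \<and> B \<subseteq> W" unfolding B_def blkin_def by (rule someI[of _ B0]) (use B0 in blast)
    have "B = B0" using L1[OF conjunct1[OF B'] B0(1) conjunct2[OF B'] B0(2) Ws] .
    then have B: "B \<in> D" "B \<subseteq> W" "\<not> B \<subseteq> U" using B' B0 by auto
    have Bs: "vec.subspace B" "vec.dim B = k" using DS B by auto
    define H where "H = U \<inter> W"
    have Hsub: "H \<in> subspaces_of_dim k" using adj unfolding grassmann_adj_def H_def subspaces_of_dim_def by (auto intro: vec.subspace_inter)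
    have Hs: "vec.subspace H" "vec.dim H = k" using Hsub unfolding subspaces_of_dim_def by auto
    define T where "T = B \<inter> U"
    have TH: "T = B \<inter> H" using B(2) unfolding T_def H_def by blast
    have Ts: "vec.subspace T" using Bs Us unfolding T_def by (simp add: vec.subspace_inter)
    have sBH: "ssum B H \<subseteq> W" using ssum_le[OF Wsub(1) B(2), of H] unfolding H_def by blast
    have dsum: "vec.dim (ssum B H) + vec.dim (B \<inter> H) = k + k"
      using vec.dim_sums_Int[OF Bs(1) Hs(1)] Bs Hs by simp
    have "vec.dim T \<le> k - 1" unfolding T_def using small_int[OF B(1) B(3) Us(1)] .
    moreover have "k - 1 \<le> vec.dim T"
    proof -
      have "vec.dim (ssum B H) \<le> k+1" using vec.dim_subset[OF sBH] Wsub(2) by simp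
      with dsum show ?thesis unfolding TH by linarith
    qed
    ultimately have Td: "vec.dim T = k - 1" by simp
    then have Tsub: "T \<in> subspaces_of_dim (k-1)" using Ts unfolding subspaces_of_dim_def by simp
    have TB: "T \<subseteq> B" unfolding T_def by blast
    have bT: "blk T = B" using blk_eq[OF Tsub B(1) TB] .
    have "psi W = (T, H)" unfolding psi_def B_def[symmetric] T_def H_def by simp
    moreover have "(T,H) \<in> Pp U"
    proof -
      have "T \<subseteq> H" using TH by blast
      moreover have "H \<subseteq> U" unfolding H_def by blast
      ultimately show ?thesis unfolding Pp_def PH_def using Tsub Hsub bT B(3) by simp
    qed
    moreover have "phi (T,H) = W"
    proof -
      have "vec.dim (ssum B H) = k + 1" using dsum Td TH k2 by simp
      then have "ssum B H = W" using dim_eq_sub[OF vec.subspace_sums[OF Bs(1) Hs(1)] Wsub(1) sBH] Wsub(2) by simp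
      then show ?thesis unfolding phi_def using bT by simp
    qed
    ultimately show ?thesis by simp
  qed
  have Bw: "phi p \<in> Nn U \<and> psi (phi p) = p" if p: "p \<in> Pp U" for p
  proof -
    obtain T H where p': "p = (T,H)" by (cases p)
    have Ts: "T \<in> subspaces_of_dim (k-1)" "H \<in> subspaces_of_dim k" "T \<subseteq> H" "H \<subseteq> U" "\<not> blk T \<subseteq> U"
      using p unfolding p' Pp_def PH_def by auto
    define B where "B = blk T"
    have B: "B \<in> D" "T \<subseteq> B" "\<not> B \<subseteq> U" using blk[OF Ts(1)] Ts(5) unfolding B_def by auto
    have Bs: "vec.subspace B" "vec.dim B = k" using DS B by auto
    have Hs: "vec.subspace H" "vec.dim H = k" using Ts(2) unfolding subspaces_of_dim_def by auto
    have Tss: "vec.subspace T" "vec.dim T = k - 1" using Ts(1) unfolding subspaces_of_dim_def by auto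
    have BU: "vec.dim (B \<inter> U) \<le> k - 1" using small_int[OF B(1) B(3) Us(1)] .
    have TBU0: "T \<subseteq> B \<inter> U" using B(2) Ts(3,4) by blast
    have TBU: "T = B \<inter> U"
      using dim_eq_sub[OF Tss(1) vec.subspace_inter[OF Bs(1) Us(1)] TBU0] BU Tss(2) by simp
    have TBH0: "T \<subseteq> B \<inter> H" using B(2) Ts(3) by blast
    have TBH: "T = B \<inter> H"
    proof -
      have "B \<inter> H \<subseteq> B \<inter> U" using Ts(4) by blast
      then have "vec.dim (B \<inter> H) \<le> vec.dim (B \<inter> U)" by (rule vec.dim_subset)
      then show ?thesis
        using dim_eq_sub[OF Tss(1) vec.subspace_inter[OF Bs(1) Hs(1)] TBH0] BU Tss(2) by simp
    qed
    define W where "W = ssum B H"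
    have Wsp: "vec.subspace W" using vec.subspace_sums[OF Bs(1) Hs(1)] unfolding W_def .
    have "vec.dim W + vec.dim (B \<inter> H) = k + k"
      using vec.dim_sums_Int[OF Bs(1) Hs(1)] Bs Hs unfolding W_def by simp
    then have Wd: "vec.dim W = k+1" using TBH Tss k2 by simp
    have Ws: "W \<in> subspaces_of_dim (k+1)" using Wsp Wd unfolding subspaces_of_dim_def by simp
    have BW: "B \<subseteq> W" using sub_in_ssum1[OF Hs(1)] unfolding W_def .
    have HW: "H \<subseteq> W" using sub_in_ssum2[OF Bs(1)] unfolding W_def .
    have UW: "U \<inter> W = H"
    proof -
      have sp: "vec.subspace (U \<inter> W)" using Us(1) Wsp by (rule vec.subspace_inter)
      have HUW: "H \<subseteq> U \<inter> W" using HW Ts(4) by blast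
      have "vec.dim (U \<inter> W) \<le> k"
      proof (rule ccontr)
        assume "\<not> ?thesis"
        then have "vec.dim U \<le> vec.dim (U \<inter> W)" using Us by simp
        then have "U \<inter> W = U" using dim_eq_sub[OF sp Us(1)] by blast
        then have UW': "U \<subseteq> W" by blast
        have "U = W" using dim_eq_sub[OF Us(1) Wsp UW'] Us Wd by simp
        then show False using BW B(3) by blast
      qed
      then show ?thesis using dim_eq_sub[OF Hs(1) sp HUW] Hs by simp
    qed
    have adj: "grassmann_adj (k+1) U W" using U Ws UW Hs unfolding grassmann_adj_def by simp
    have "phi p = W" unfolding p' phi_def W_def B_def by simp
    moreover have "W \<in> Nn U" unfolding Nn_def using Ws adj B(1,3) BW by blast
    moreover have "blkin W = B"
    proof -
      have bw: "blkin W \<in> D \<and> blkin W \<subseteq> W" unfolding blkin_def by (rule someI[of _ B]) (use B BW in blast)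
      show ?thesis using L1[OF conjunct1[OF bw] B(1) conjunct2[OF bw] BW Ws] .
    qed
    then have "psi W = p" unfolding psi_def p' using TBU UW by simp
    ultimately show ?thesis by simp
  qed
  have "bij_betw psi (Nn U) (Pp U)"
  proof (rule bij_betw_byWitness[where f'=phi])
    show "\<forall>a\<in>Nn U. phi (psi a) = a" using A by blast
    show "\<forall>a\<in>Pp U. psi (phi a) = a" using Bw by blast
    show "psi ` Nn U \<subseteq> Pp U" using A by blast
    show "phi ` Pp U \<subseteq> Nn U" using Bw by blast
  qed
  then show ?thesis by (rule bij_betw_same_card)
qed

end

context qdes begin

definition Cc where "Cc = {U \<in> subspaces_of_dim (k + 1). \<not> (\<exists>B \<in> D. B \<subseteq> U)}"

lemma PH_pos: "(U::('a^'n) set) \<in> subspaces_of_dim (k+1) \<Longrightarrow> 0 < card (PH k U)"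
proof -
  assume U: "U \<in> subspaces_of_dim (k+1)"
  then have Us: "vec.subspace U" "vec.dim U = k+1" unfolding subspaces_of_dim_def by auto
  obtain H where H: "H \<in> subspaces_of_dim k" "H \<subseteq> U" using sub_of_dim[OF Us(1), of k] Us(2) by auto
  then have Hs: "vec.subspace H" "vec.dim H = k" unfolding subspaces_of_dim_def by auto
  obtain T where T: "T \<in> subspaces_of_dim (k-1)" "T \<subseteq> H" using sub_of_dim[OF Hs(1), of "k-1"] Hs(2) by auto
  have "(T,H) \<in> PH k U" unfolding PH_def using T H by simp
  moreover have "finite (PH k U)" by (rule finite)
  ultimately show ?thesis using card_gt_0_iff by blast
qed

lemma beta0:
  assumes "U \<in> Cc"
  shows "card {v \<in> subspaces_of_dim (k + 1) - Cc. grassmann_adj (k+1) U v} = card (PH k U)"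
proof -
  have U: "U \<in> subspaces_of_dim (k+1)" "\<not> (\<exists>B \<in> D. B \<subseteq> U)" using assms unfolding Cc_def by auto
  have "{v \<in> subspaces_of_dim (k + 1) - Cc. grassmann_adj (k+1) U v} = Nn U"
    unfolding Nn_def Cc_def using U(2) by blast
  moreover have "Pp U = PH k U"
  proof -
    have "\<not> blk T \<subseteq> U" if "T \<in> subspaces_of_dim (k-1)" for T using blk[OF that] U(2) by blast
    then show ?thesis unfolding Pp_def PH_def by blast
  qed
  ultimately show ?thesis using G[OF U(1)] by simp
qed

lemma gamma1:
  assumes v: "v \<in> subspaces_of_dim (k+1)" and B0: "B0 \<in> D" "B0 \<subseteq> v"
  shows "card {c \<in> Cc. grassmann_adj (k+1) v c} = card (NB k v) - (card (AB k v B0) + card (PHB k v B0))"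
proof -
  have vs: "vec.subspace v" "vec.dim v = k+1" using v unfolding subspaces_of_dim_def by auto
  have B0s: "vec.subspace B0" "vec.dim B0 = k" using DS[OF B0(1)] by auto
  define X where "X = {W \<in> subspaces_of_dim (k + 1) - Cc. grassmann_adj (k+1) v W}"
  have e1: "{c \<in> Cc. grassmann_adj (k+1) v c} = NB k v - X"
    unfolding X_def NB_def Cc_def by blast
  have XN: "X \<subseteq> NB k v" unfolding X_def NB_def by blast
  have e2: "X = AB k v B0 \<union> Nn v"
  proof
    show "X \<subseteq> AB k v B0 \<union> Nn v"
    proof
      fix W assume "W \<in> X"
      then have W: "W \<in> subspaces_of_dim (k+1)" "grassmann_adj (k+1) v W" and "\<exists>B\<in>D. B \<subseteq> W"
        unfolding X_def Cc_def by auto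
      then obtain B where B: "B \<in> D" "B \<subseteq> W" by blast
      show "W \<in> AB k v B0 \<union> Nn v"
      proof (cases "B0 \<subseteq> W")
        case True
        have "W \<noteq> v"
        proof
          assume "W = v"
          then show False using W(2) vs unfolding grassmann_adj_def by simp
        qed
        then show ?thesis unfolding AB_def using W(1) True by blast
      next
        case False
        have "\<not> B \<subseteq> v"
        proof
          assume "B \<subseteq> v"
          then have "B = B0" using L1[OF B(1) B0(1) _ B0(2) v] by simp
          then show False using False B(2) by simp
        qed
        then show ?thesis unfolding Nn_def using W B by blast
      qed
    qed
  next
    show "AB k v B0 \<union> Nn v \<subseteq> X"
    proof
      fix W assume "W \<in> AB k v B0 \<union> Nn v"
      then show "W \<in> X"
      proof
        assume "W \<in> AB k v B0"
        then have W: "W \<in> subspaces_of_dim (k+1)" "B0 \<subseteq> W" "W \<noteq> v" unfolding AB_def by auto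
        have Ws: "vec.subspace W" "vec.dim W = k+1" using W(1) unfolding subspaces_of_dim_def by auto
        have sp: "vec.subspace (v \<inter> W)" using vs(1) Ws(1) by (rule vec.subspace_inter)
        have "B0 \<subseteq> v \<inter> W" using B0(2) W(2) by blast
        then have "k \<le> vec.dim (v \<inter> W)" using vec.dim_subset B0s(2) by metis
        moreover have "vec.dim (v \<inter> W) \<le> k"
        proof (rule ccontr)
          assume "\<not> ?thesis"
          then have "vec.dim v \<le> vec.dim (v \<inter> W)" using vs by simp
          then have "v \<inter> W = v" using dim_eq_sub[OF sp vs(1)] by blast
          then have vW: "v \<subseteq> W" by blast
          have "v = W" using dim_eq_sub[OF vs(1) Ws(1) vW] vs Ws by simp
          then show False using W(3) by simp
        qed
        ultimately have "vec.dim (v \<inter> W) = k" by simp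
        then have "grassmann_adj (k+1) v W" using v W(1) unfolding grassmann_adj_def by simp
        then show ?thesis unfolding X_def Cc_def using W B0(1) by blast
      next
        assume "W \<in> Nn v"
        then show ?thesis unfolding X_def Nn_def Cc_def by blast
      qed
    qed
  qed
  have disj: "AB k v B0 \<inter> Nn v = {}"
  proof (rule ccontr)
    assume "AB k v B0 \<inter> Nn v \<noteq> {}"
    then obtain W B where W: "W \<in> subspaces_of_dim (k+1)" "B0 \<subseteq> W" "B \<in> D" "B \<subseteq> W" "\<not> B \<subseteq> v"
      unfolding AB_def Nn_def by blast
    have "B = B0" using L1[OF W(3) B0(1) W(4) W(2) W(1)] .
    then show False using W(5) B0(2) by simp
  qed
  have e3: "Pp v = PHB k v B0"
  proof -
    have "(\<not> blk T \<subseteq> v) = (\<not> T \<subseteq> B0)" if T: "T \<in> subspaces_of_dim (k-1)" for T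
    proof
      assume "\<not> blk T \<subseteq> v"
      then show "\<not> T \<subseteq> B0" using blk_eq[OF T B0(1)] B0(2) by auto
    next
      assume a: "\<not> T \<subseteq> B0"
      show "\<not> blk T \<subseteq> v"
      proof
        assume "blk T \<subseteq> v"
        then have "blk T = B0" using L1[OF conjunct1[OF blk[OF T]] B0(1) _ B0(2) v] by simp
        then show False using a blk[OF T] by simp
      qed
    qed
    then show ?thesis unfolding Pp_def PHB_def PH_def by blast
  qed
  have "card {c \<in> Cc. grassmann_adj (k+1) v c} = card (NB k v) - card X"
    unfolding e1 using XN by (simp add: card_Diff_subset)
  also have "card X = card (AB k v B0) + card (Nn v)"
    unfolding e2 using disj by (simp add: card_Un_disjoint)
  also have "card (Nn v) = card (PHB k v B0)" using G[OF v] e3 by simp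
  finally show ?thesis .
qed

end

theorem theorem4p2:
  fixes D :: "('a::{field,finite} ^ 'n) set set"
    and k :: nat
  assumes "2 \<le> k" and "k < CARD('n)"
    and "is_q_design (k - 1) k 1 D"
  defines "C \<equiv> {U \<in> subspaces_of_dim (k + 1). \<not> (\<exists>B \<in> D. B \<subseteq> U)}"
  assumes "C \<noteq> {}" and "subspaces_of_dim (k + 1) - C \<noteq> {}"
  shows "crc_radius1 (subspaces_of_dim (k + 1)) (grassmann_adj (k + 1)) C"
proof -
  have des: "D \<subseteq> subspaces_of_dim k" "\<forall>T \<in> subspaces_of_dim (k-1). card {B \<in> D. T \<subseteq> B} = 1"
    using assms(3) unfolding is_q_design_def by auto
  interpret qdes D k
  proof
    show "2 \<le> k" by fact
    show "D \<subseteq> subspaces_of_dim k" by (rule des(1))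
    show "card {B \<in> D. T \<subseteq> B} = 1" if "T \<in> subspaces_of_dim (k-1)" for T using des(2) that by blast
  qed
  have CC: "C = Cc" unfolding C_def Cc_def ..
  let ?V = "subspaces_of_dim (k + 1) :: ('a^'n) set set"
  let ?adj = "grassmann_adj (k + 1) :: ('a^'n) set \<Rightarrow> _"
  obtain c0 where c0: "c0 \<in> C" using assms(5) by blast
  have c0V: "c0 \<in> ?V" using c0 unfolding C_def by blast
  obtain v0 where v0: "v0 \<in> ?V - C" using assms(6) by blast
  obtain B00 where B00: "B00 \<in> D" "B00 \<subseteq> v0" using v0 unfolding C_def by blast
  have Dk: "B \<in> subspaces_of_dim k" if "B \<in> D" for B using that Dsub by blast
  define beta0 where "beta0 = card (PH k c0)"
  define gamma1 where "gamma1 = card {c \<in> C. ?adj v0 c}"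
  have hb: "card {v \<in> ?V - C. ?adj c v} = beta0" if c: "c \<in> C" for c
  proof -
    have cV: "c \<in> ?V" using c unfolding C_def by blast
    show ?thesis using beta0[of c] c CC PH_inv[OF cV c0V, of k] unfolding beta0_def by simp
  qed
  have hg: "card {c \<in> C. ?adj v c} = gamma1" if v: "v \<in> ?V - C" for v
  proof -
    obtain Bv where Bv: "Bv \<in> D" "Bv \<subseteq> v" using v unfolding C_def by blast
    have vV: "v \<in> ?V" using v by blast
    have v0V: "v0 \<in> ?V" using v0 by blast
    have "card {c \<in> C. ?adj v c} = card (NB k v) - (card (AB k v Bv) + card (PHB k v Bv))"
      using gamma1[OF vV Bv] CC by simp
    also have "\<dots> = card (NB k v0) - (card (AB k v0 B00) + card (PHB k v0 B00))"
      using flag_inv[OF vV v0V Dk[OF Bv(1)] Dk[OF B00(1)] Bv(2) B00(2), of k] by simp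
    also have "\<dots> = gamma1" unfolding gamma1_def using gamma1[OF v0V B00] CC by simp
    finally show ?thesis .
  qed
  have gpos: "0 < gamma1"
  proof -
    have cp: "0 < card {v \<in> ?V - C. ?adj c0 v}" using hb[OF c0] PH_pos[OF c0V] unfolding beta0_def by simp
    have "{v \<in> ?V - C. ?adj c0 v} \<noteq> {}" using card_gt_0_iff[THEN iffD1, OF cp] by (rule conjunct1)
    then obtain v1 where v1: "v1 \<in> ?V - C" "?adj c0 v1" by blast
    have "?adj v1 c0" using v1(2) unfolding grassmann_adj_def by (simp add: Int_commute)
    then have "c0 \<in> {c \<in> C. ?adj v1 c}" using c0 by blast
    then have ne: "{c \<in> C. ?adj v1 c} \<noteq> {}" by blast
    have "0 < card {c \<in> C. ?adj v1 c}" using card_gt_0_iff[THEN iffD2, OF conjI[OF ne finite]] .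
    then show ?thesis using hg[OF v1(1)] by simp
  qed
  have cov: "\<forall>v\<in>?V. v \<in> C \<or> (\<exists>c\<in>C. ?adj v c)"
  proof
    fix v assume vV: "v \<in> ?V"
    show "v \<in> C \<or> (\<exists>c\<in>C. ?adj v c)"
    proof (cases "v \<in> C")
      case True
      then show ?thesis by (rule disjI1)
    next
      case False
      then have vC: "v \<in> ?V - C" using vV by blast
      have "card {c \<in> C. ?adj v c} > 0" using hg[OF vC] gpos by simp
      then have "{c \<in> C. ?adj v c} \<noteq> {}" using card_gt_0_iff by blast
      then show ?thesis by blast
    qed
  qed
  have ex: "\<exists>beta0 gamma1. (\<forall>c\<in>C. card {v \<in> ?V - C. ?adj c v} = beta0) \<and>
        (\<forall>v\<in>?V - C. card {c \<in> C. ?adj v c} = gamma1)"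
    apply (rule exI[of _ beta0])
    apply (rule exI[of _ gamma1])
    using hb hg by blast
  have sub: "C \<subseteq> ?V" unfolding C_def by blast
  have neq: "C \<noteq> ?V" using assms(6) by blast
  show ?thesis unfolding crc_radius1_def using assms(5) sub neq cov ex by blast
qed

end
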